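(* Fix a real $\varepsilon\in(0,1/2]$. Let $\mathcal C\subseteq F^n$ be a (not necessarily linear) code with rate $R=(\log_q|\mathcal C|)/n\in[\varepsilon,1-\varepsilon]$, let $L\in\mathbb Z^+$ satisfy $$L<\frac{1}{\sqrt{2n}}\,2^{\eta_q(\varepsilon)\,n},$$ and let $\tau\in\mathbb Z_{\ge0}$ satisfy $\tau\ge \frac{L n(1-R)}{L+1}$. If $\mathcal C$ is $(\tau,L)$-list decodable, then $L<q-1$.
   Context: $F=\mathrm{GF}(q)$. For $L\in\mathbb Z^+$ and $\tau\in\mathbb Z_{\ge0}$, a code $\mathcal C\subseteq F^n$ is $(\tau,L)$-list decodable if for every $y\in F^n$ at most $L$ codewords of $\mathcal C$ lie at Hamming distance at most $\tau$ from $y$. With $\mathsf h(x)=-x\log_2x-(1-x)\log_2(1-x)$ the binary entropy function, define for $\varepsilon\in[0,1/2]$: $\eta_q(\varepsilon)=\mathsf h\!\left(\frac{q-1}{q}(1-\varepsilon)\right)-(1-\varepsilon)\,\mathsf h(1/q)$. *)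

theory Defs
  imports Complex_Main
begin

text \<open>Words of length n over the alphabet 'a are lists of length n.\<close>

definition hamming_dist :: "'a list \<Rightarrow> 'a list \<Rightarrow> nat" where
  "hamming_dist x y = card {i. i < length x \<and> x ! i \<noteq> y ! i}"

definition list_decodable :: "nat \<Rightarrow> 'a list set \<Rightarrow> nat \<Rightarrow> nat \<Rightarrow> bool" where
  "list_decodable n C tau L \<longleftrightarrow>
     (\<forall>y. length y = n \<longrightarrow> card {c \<in> C. hamming_dist c y \<le> tau} \<le> L)"

definition bin_entropy :: "real \<Rightarrow> real" where
  "bin_entropy x = - x * log 2 x - (1 - x) * log 2 (1 - x)"

definition eta :: "nat \<Rightarrow> real \<Rightarrow> real" where
  "eta q eps = bin_entropy ((real q - 1) / real q * (1 - eps)) - (1 - eps) * bin_entropy (1 / real q)"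

end

theory Submission
  imports Defs "HOL-Analysis.Analysis"
begin


lemma ln_ratio_lower:
  fixes x :: real assumes "0 \<le> x" "x < 1"
  shows "2*x + 2/3*x^3 \<le> ln ((1+x)/(1-x))"
proof -
  let ?f = "\<lambda>t::real. ln (1+t) - ln (1-t) - 2*t - 2/3*t^3"
  have "?f 0 \<le> ?f x"
  proof (rule DERIV_nonneg_imp_nondecreasing[OF assms(1)])
    fix t :: real assume t: "0 \<le> t" "t \<le> x"
    hence t1: "t < 1" using assms by auto
    have a: "1+t > 0" "1-t > 0" using t t1 by auto
    have "DERIV ?f t :> (1/(1+t) - (-1)/(1-t) - 2 - 2/3*(3*t^2))"
      using t t1 by (intro derivative_eq_intros) auto
    moreover have "1/(1+t) - (-1)/(1-t) - 2 - 2/3*(3*t^2) = 2*t^4/((1+t)*(1-t))"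
      using a by (simp add: divide_simps) (simp add: algebra_simps power4_eq_xxxx power2_eq_square)
    moreover have "2*t^4/((1+t)*(1-t)) \<ge> 0" using a by simp
    ultimately show "\<exists>y. DERIV ?f t :> y \<and> 0 \<le> y" by auto
  qed
  thus ?thesis using assms by (simp add: ln_div)
qed

lemma ln_ratio_upper:
  fixes x :: real assumes "0 \<le> x" "x < 1"
  shows "ln ((1+x)/(1-x)) \<le> 2*x + 2/3*x^3/((1+x)*(1-x))"
proof -
  let ?f = "\<lambda>t::real. 2*t + 2/3*t^3/((1+t)*(1-t)) - ln (1+t) + ln (1-t)"
  have "?f 0 \<le> ?f x"
  proof (rule DERIV_nonneg_imp_nondecreasing[OF assms(1)])
    fix t :: real assume t: "0 \<le> t" "t \<le> x"
    hence t1: "t < 1" using assms by auto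
    have a: "1+t > 0" "1-t > 0" using t t1 by auto
    have "DERIV ?f t :> 4/3*t^4/((1+t)*(1-t))^2"
      apply (intro derivative_eq_intros)
      using a apply simp_all
      apply (simp add: divide_simps)
      apply (simp add: algebra_simps power2_eq_square power3_eq_cube power4_eq_xxxx)
      done
    moreover have "4/3*t^4/((1+t)*(1-t))^2 \<ge> 0" by simp
    ultimately show "\<exists>y. DERIV ?f t :> y \<and> 0 \<le> y" by auto
  qed
  thus ?thesis using assms by (simp add: ln_div)
qed

definition lc :: "nat \<Rightarrow> real" where
  "lc j = ln (fact j) + real j - (real j + 1/2) * ln (real j)"

lemma lc_step:
  assumes "j \<ge> 1"
  shows "lc j - lc (Suc j) = (real j + 1/2) * ln ((real j + 1) / real j) - 1"
proof -
  have h1: "ln (fact (Suc j) :: real) = ln (real j + 1) + ln (fact j)"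
    by (simp add: ln_mult add.commute)
  have h2: "ln ((real j + 1) / real j) = ln (real j + 1) - ln (real j)"
    using assms by (simp add: ln_div)
  show ?thesis unfolding lc_def h2 h1 by (simp add: algebra_simps)
qed

lemma lc_step_bounds:
  assumes "j \<ge> 1"
  shows "0 \<le> lc j - lc (Suc j)" "lc j - lc (Suc j) \<le> 1/(12*real j) - 1/(12*(real j + 1))"
proof -
  define x :: real where "x = 1 / (2 * real j + 1)"
  have j: "real j \<ge> 1" using assms by simp
  have x0: "0 \<le> x" and x1: "x < 1" using j by (auto simp: x_def)
  have r: "(1+x)/(1-x) = (real j + 1)/real j"
    using j unfolding x_def by (simp add: divide_simps)
  have e1: "(real j + 1/2) * (2*x) = 1" using j unfolding x_def by (simp add: divide_simps)
  have e2: "(real j + 1/2) * (2/3*x^3) \<ge> 0" using j x0 by simp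
  have e3: "(real j + 1/2) * (2/3*x^3/((1+x)*(1-x))) = 1/(12*real j) - 1/(12*(real j + 1))"
    using j unfolding x_def by (simp add: divide_simps) (simp add: algebra_simps power3_eq_cube)
  have lo: "2*x + 2/3*x^3 \<le> ln ((real j + 1)/real j)" using ln_ratio_lower[OF x0 x1] r by simp
  have up: "ln ((real j + 1)/real j) \<le> 2*x + 2/3*x^3/((1+x)*(1-x))" using ln_ratio_upper[OF x0 x1] r by simp
  have jp: "real j + 1/2 > 0" using j by simp
  have "(real j + 1/2) * (2*x + 2/3*x^3) \<le> (real j + 1/2) * ln ((real j + 1)/real j)"
    using lo jp by (intro mult_left_mono) auto
  moreover have "(real j + 1/2) * (2*x + 2/3*x^3) = (real j + 1/2) * (2*x) + (real j + 1/2) * (2/3*x^3)"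
    by (simp only: distrib_left)
  ultimately have "1 \<le> (real j + 1/2) * ln ((real j + 1)/real j)" using e1 e2 by linarith
  thus "0 \<le> lc j - lc (Suc j)" using lc_step[OF assms] by simp
  have "(real j + 1/2) * ln ((real j + 1)/real j) \<le> (real j + 1/2) * (2*x + 2/3*x^3/((1+x)*(1-x)))"
    using up jp by (intro mult_left_mono) auto
  moreover have "(real j + 1/2) * (2*x + 2/3*x^3/((1+x)*(1-x))) = (real j + 1/2) * (2*x) + (real j + 1/2) * (2/3*x^3/((1+x)*(1-x)))"
    by (simp only: distrib_left)
  ultimately have "(real j + 1/2) * ln ((real j + 1)/real j) \<le> 1 + (1/(12*real j) - 1/(12*(real j + 1)))"
    using e1 e3 by linarith
  thus "lc j - lc (Suc j) \<le> 1/(12*real j) - 1/(12*(real j + 1))" using lc_step[OF assms] by simp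
qed

lemma lc_decr:
  assumes "1 \<le> i" "i \<le> j" shows "lc j \<le> lc i"
  using assms(2)
proof (induction j rule: dec_induct)
  case base thus ?case by simp
next
  case (step k) thus ?case using lc_step_bounds(1)[of k] assms(1) by simp
qed

lemma lc_lower:
  assumes "1 \<le> j" shows "11/12 + 1/(12*real j) \<le> lc j"
  using assms
proof (induction j rule: dec_induct)
  case base thus ?case by (simp add: lc_def)
next
  case (step k) thus ?case using lc_step_bounds(2)[of k] by (simp add: algebra_simps)
qed

lemma lc_1: "lc 1 = 1" by (simp add: lc_def)
lemma lc_2: "lc 2 = 2 - 3/2 * ln 2" by (simp add: lc_def)

lemma ln2_lower: "56/81 \<le> ln (2::real)"
proof -
  have "2*(1/3) + 2/3*(1/3)^3 \<le> ln ((1+1/3)/(1-1/3::real))" by (rule ln_ratio_lower) auto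
  thus ?thesis by (simp add: power3_eq_cube)
qed

lemma ln_fact_lc: "ln (fact j :: real) = lc j - real j + (real j + 1/2) * ln (real j)"
  by (simp add: lc_def)

lemma ln_binom_eq:
  assumes "k \<le> n"
  shows "ln (real (n choose k)) = ln (fact n) - ln (fact k) - ln (fact (n-k))"
proof -
  have "real (n choose k) = fact n / (fact k * fact (n-k))" by (rule binomial_fact[OF assms])
  thus ?thesis by (simp add: ln_div ln_mult)
qed

lemma alg_aux: "(N::real) - K - M = 0 \<Longrightarrow> X = l1 - N + (N * a + 1/2 * a) - (l2 - K + (K * b + 1/2*b)) - (l3 - M + (M*c + 1/2*c))
  \<Longrightarrow> X = l1 - l2 - l3 + (N*a - K*b - M*c) + (a - b - c)/2"
  by (simp add: field_simps)

lemma ln_binom_lc: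
  assumes "k \<le> n"
  shows "ln (real (n choose k)) = (lc n - lc k - lc (n-k)) + (real n * ln (real n) - real k * ln (real k) - real (n-k) * ln (real (n-k)))
     + (ln (real n) - ln (real k) - ln (real (n-k)))/2"
proof -
  have "ln (real (n choose k)) = (lc n - real n + (real n + 1/2) * ln (real n)) - (lc k - real k + (real k + 1/2) * ln (real k))
     - (lc (n-k) - real (n-k) + (real (n-k) + 1/2) * ln (real (n-k)))"
    unfolding ln_binom_eq[OF assms] ln_fact_lc ..
  note eq2 = this[unfolded distrib_right]
  have "real n - real k - real (n-k) = 0" using assms by simp
  from alg_aux[OF this eq2] show ?thesis .
qed


lemma alg_aux2: fixes l2n l2 nn a b c lk lm P :: real shows "l2n = l2 + nn \<Longrightarrow> 11/12 \<le> a \<Longrightarrow> b \<le> 2 - 3/2*l2 \<Longrightarrow> c \<le> 2 - 3/2*l2 \<Longrightarrow> 3*l2 + lk + lm \<le> l2 + nn + nn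
 \<Longrightarrow> 56/81 \<le> l2 \<Longrightarrow> P - l2n/2 \<le> a - b - c + P + (nn - lk - lm)/2"
  by (simp add: field_simps)

lemma binom_lower_ln_mid:
  assumes "2 \<le> k" "2 \<le> n - k" "k \<le> n"
  shows "real n * ln (real n) - real k * ln (real k) - real (n-k) * ln (real (n-k)) - ln (2*real n)/2 \<le> ln (real (n choose k))"
proof -
  define m where "m = n - k"
  have nm: "real n = real k + real m" using assms unfolding m_def by simp
  have n1: "1 \<le> n" using assms by simp
  have "0 \<le> 1/(12*real n)" by simp
  hence l1: "11/12 \<le> lc n" using lc_lower[OF n1] by linarith
  have l2: "lc k \<le> lc 2" using lc_decr assms by simp
  have l3: "lc m \<le> lc 2" using lc_decr assms unfolding m_def by simp
  have kpos: "real k > 0" "real m > 0" "real n > 0" using assms unfolding m_def by auto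
  have sq: "8 * (real k * real m) \<le> 2 * real n * real n"
  proof -
    have "0 \<le> (real k - real m)^2" by simp
    thus ?thesis unfolding nm by (simp add: power2_eq_square algebra_simps)
  qed
  have "ln (8 * (real k * real m)) \<le> ln (2 * real n * real n)"
    using sq kpos by simp
  hence "ln 8 + ln (real k) + ln (real m) \<le> ln 2 + ln (real n) + ln (real n)"
    using kpos by (simp add: ln_mult)
  moreover have "ln (8::real) = 3 * ln 2"
    using ln_realpow[of 2 3] by simp
  ultimately have key: "3 * ln 2 + ln (real k) + ln (real m) \<le> ln 2 + ln (real n) + ln (real n)" by simp
  have "ln (2 * real n) = ln 2 + ln (real n)" using kpos by (simp add: ln_mult)
  thus ?thesis
    unfolding ln_binom_lc[OF assms(3)] m_def[symmetric]
    using l1 l2 l3 key ln2_lower unfolding lc_2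
    by (rule alg_aux2)
qed


lemma binom_one_aux:
  assumes "2 \<le> n"
  shows "(real n - 1) * (ln (real n) - ln (real n - 1)) \<le> ln (2 * real n) / 2"
proof -
  have n: "real n \<ge> 2" using assms by simp
  have "ln (real n) - ln (real n - 1) = ln (real n / (real n - 1))" using n by (simp add: ln_div)
  also have "\<dots> \<le> real n / (real n - 1) - 1" using n by (intro ln_le_minus_one) simp
  finally have "(real n - 1) * (ln (real n) - ln (real n - 1)) \<le> (real n - 1) * (real n / (real n - 1) - 1)"
    using n by (intro mult_left_mono) auto
  also have "\<dots> = 1" using n by (simp add: field_simps)
  finally have le1: "(real n - 1) * (ln (real n) - ln (real n - 1)) \<le> 1" .
  consider "n = 2" | "n = 3" | "n \<ge> 4" using assms by linarith
  thus ?thesis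
  proof cases
    case 1
    have "ln (4::real) = 2 * ln 2" using ln_realpow[of 2 2] by simp
    thus ?thesis using 1 by simp
  next
    case 3
    have "ln (8::real) = 3 * ln 2" using ln_realpow[of 2 3] by simp
    moreover have "ln 8 \<le> ln (2 * real n)" using 3 by simp
    ultimately show ?thesis using le1 ln2_lower by linarith
  next
    case 2
    have a: "ln (27::real) = 3 * ln 3" using ln_realpow[of 3 3] by simp
    have b: "ln (32::real) = 5 * ln 2" using ln_realpow[of 2 5] by simp
    have "ln (27::real) \<le> ln 32" by simp
    hence "3 * ln 3 \<le> 5 * ln (2::real)" using a b by simp
    moreover have "ln (6::real) = ln 2 + ln 3" using ln_mult[of 2 3] by simp
    ultimately show ?thesis using 2 by simp
  qed
qed

lemma binom_lower_ln:
  assumes "0 < k" "k < n"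
  shows "real n * ln (real n) - real k * ln (real k) - real (n-k) * ln (real (n-k)) - ln (2*real n)/2 \<le> ln (real (n choose k))"
proof -
  consider "k = 1" | "k = n - 1" | "2 \<le> k" "2 \<le> n - k" using assms by linarith
  thus ?thesis
  proof cases
    case 1
    have n2: "2 \<le> n" using assms 1 by simp
    have "real (n - 1) = real n - 1" using n2 by simp
    thus ?thesis using binom_one_aux[OF n2] 1 by (simp add: algebra_simps)
  next
    case 2
    have n2: "2 \<le> n" using assms 2 by simp
    have c: "n choose k = n" using 2 assms binomial_symmetric[of 1 n] by simp
    have "real (n - 1) = real n - 1" using n2 by simp
    thus ?thesis using binom_one_aux[OF n2] 2 c n2 by (simp add: algebra_simps)
  next
    case 3
    thus ?thesis using binom_lower_ln_mid assms by simp
  qed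
qed

lemma bin_entropy_0: "bin_entropy 0 = 0" by (simp add: bin_entropy_def)
lemma bin_entropy_1: "bin_entropy 1 = 0" by (simp add: bin_entropy_def)

lemma entropy_ln:
  assumes "0 < k" "k < n"
  shows "ln 2 * (real n * bin_entropy (real k / real n)) = real n * ln (real n) - real k * ln (real k) - real (n-k) * ln (real (n-k))"
proof -
  have kp: "real k > 0" "real n > 0" "real (n-k) > 0" using assms by auto
  have e1: "1 - real k / real n = real (n-k) / real n" using assms kp by (simp add: field_simps)
  have l1: "ln (real k / real n) = ln (real k) - ln (real n)" using kp by (simp add: ln_div)
  have l2: "ln (real (n-k) / real n) = ln (real (n-k)) - ln (real n)" using kp by (simp add: ln_div)
  have "ln 2 * (real n * bin_entropy (real k / real n)) =
     real n * (- (real k / real n) * ln (real k / real n) - (real (n-k) / real n) * ln (real (n-k) / real n))"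
    unfolding bin_entropy_def e1 log_def by (simp add: field_simps)
  also have "\<dots> = - real k * ln (real k / real n) - real (n-k) * ln (real (n-k) / real n)"
    using kp by (simp add: field_simps)
  also have "\<dots> = real n * ln (real n) - real k * ln (real k) - real (n-k) * ln (real (n-k))"
  proof -
    have "real n = real k + real (n-k)" using assms by simp
    hence "real n * ln (real n) = real k * ln (real n) + real (n-k) * ln (real n)" by (metis distrib_right)
    thus ?thesis unfolding l1 l2 by (simp add: right_diff_distrib)
  qed
  finally show ?thesis .
qed

lemma binom_lower:
  assumes "k \<le> n" "1 \<le> n"
  shows "2 powr (real n * bin_entropy (real k / real n)) / sqrt (2 * real n) \<le> real (n choose k)"
proof -
  have s1: "sqrt (2 * real n) \<ge> 1" using assms by simp
  consider "k = 0" | "k = n" | "0 < k" "k < n" using assms by linarith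
  thus ?thesis
  proof cases
    case 1 thus ?thesis using s1 by (simp add: bin_entropy_0 divide_le_eq)
  next
    case 2 thus ?thesis using s1 assms by (simp add: bin_entropy_1 divide_le_eq)
  next
    case 3
    let ?X = "real n * ln (real n) - real k * ln (real k) - real (n-k) * ln (real (n-k))"
    have Cpos: "real (n choose k) > 0" using assms by simp
    have "2 powr (real n * bin_entropy (real k / real n)) = exp ?X"
      unfolding powr_def using entropy_ln[OF 3] by (simp add: mult.commute)
    moreover have "sqrt (2 * real n) = exp (ln (2 * real n) / 2)"
      using assms by (simp add: exp_divide_power_eq ln_sqrt[symmetric])
    ultimately have "2 powr (real n * bin_entropy (real k / real n)) / sqrt (2 * real n) = exp (?X - ln (2*real n)/2)"
      by (simp add: exp_diff)
    also have "\<dots> \<le> exp (ln (real (n choose k)))"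
      using binom_lower_ln[OF 3] by simp
    also have "\<dots> = real (n choose k)" using Cpos by simp
    finally show ?thesis .
  qed
qed


lemma hamming_dist_Cons:
  "hamming_dist (a#x) (b#y) = (if a = b then 0 else 1) + hamming_dist x y"
proof -
  have "{i. i < length (a#x) \<and> (a#x) ! i \<noteq> (b#y) ! i} =
        (if a = b then {} else {0}) \<union> Suc ` {i. i < length x \<and> x ! i \<noteq> y ! i}"
  proof (intro equalityI subsetI)
    fix i assume "i \<in> {i. i < length (a#x) \<and> (a#x) ! i \<noteq> (b#y) ! i}"
    thus "i \<in> (if a = b then {} else {0}) \<union> Suc ` {i. i < length x \<and> x ! i \<noteq> y ! i}"
      by (cases i) auto
  next
    fix i assume "i \<in> (if a = b then {} else {0}) \<union> Suc ` {i. i < length x \<and> x ! i \<noteq> y ! i}"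
    thus "i \<in> {i. i < length (a#x) \<and> (a#x) ! i \<noteq> (b#y) ! i}"
      by (auto split: if_splits)
  qed
  moreover have "finite {i. i < length x \<and> x ! i \<noteq> y ! i}" by simp
  ultimately show ?thesis unfolding hamming_dist_def
    by (auto simp: card_image)
qed

lemma hamming_dist_Nil: "hamming_dist [] y = 0" by (simp add: hamming_dist_def)

lemma finite_words: "finite {y::'a::finite list. length y = m}"
proof -
  have "{y::'a list. length y = m} = {xs. set xs \<subseteq> UNIV \<and> length xs = m}" by auto
  thus ?thesis using finite_lists_length_eq[of "UNIV::'a set" m] by simp
qed

lemma binom_aux: "(n choose Suc j) * (Q::nat)^(Suc j) + Q * ((n choose j) * Q^j) = (Suc n choose Suc j) * Q^(Suc j)"
  by (simp add: algebra_simps)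

lemma sphere_card:
  fixes c :: "'a::finite list"
  shows "card {y. length y = length c \<and> hamming_dist c y = k} = (length c choose k) * (card (UNIV::'a set) - 1)^k"
proof (induction c arbitrary: k)
  case Nil
  have "{y::'a list. length y = 0 \<and> hamming_dist [] y = k} = (if k = 0 then {[]} else {})"
    by (auto simp: hamming_dist_Nil)
  thus ?case by simp
next
  case (Cons a c)
  let ?S = "\<lambda>k. {y::'a list. length y = length c \<and> hamming_dist c y = k}"
  have fin: "finite (?S j)" for j
    by (rule finite_subset[OF _ finite_words[of "length c"]]) auto
  show ?case
  proof (cases k)
    case 0
    have "{y. length y = length (a#c) \<and> hamming_dist (a#c) y = k} = (\<lambda>y. a#y) ` ?S 0"
      using 0 by (auto simp: length_Suc_conv hamming_dist_Cons split: if_splits)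
    hence "card {y. length y = length (a#c) \<and> hamming_dist (a#c) y = k} = card (?S 0)"
      by (simp add: card_image inj_on_def)
    thus ?thesis using Cons.IH[of 0] 0 by simp
  next
    case (Suc j)
    have eq: "{y. length y = length (a#c) \<and> hamming_dist (a#c) y = k} =
      (\<lambda>y. a#y) ` ?S (Suc j) \<union> (\<lambda>(b,y). b#y) ` ({b. b \<noteq> a} \<times> ?S j)"
      using Suc by (auto simp: length_Suc_conv hamming_dist_Cons split: if_splits)
    have disj: "(\<lambda>y. a#y) ` ?S (Suc j) \<inter> (\<lambda>(b,y). b#y) ` ({b. b \<noteq> a} \<times> ?S j) = {}" by auto
    have c1: "card ((\<lambda>y. a#y) ` ?S (Suc j)) = card (?S (Suc j))" by (simp add: card_image inj_on_def)
    have c2: "card ((\<lambda>(b,y). b#y) ` ({b. b \<noteq> a} \<times> ?S j)) = card ({b. b \<noteq> a} \<times> ?S j)"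
      by (rule card_image) (auto simp: inj_on_def)
    have c3: "card {b::'a. b \<noteq> a} = card (UNIV::'a set) - 1"
    proof -
      have "{b::'a. b \<noteq> a} = UNIV - {a}" by auto
      thus ?thesis by (simp add: card_Diff_singleton)
    qed
    have "card {y. length y = length (a#c) \<and> hamming_dist (a#c) y = k} =
          card (?S (Suc j)) + (card (UNIV::'a set) - 1) * card (?S j)"
      unfolding eq using disj fin c1 c2 c3 by (simp add: card_Un_disjoint card_cartesian_product)
    also have "\<dots> = (length c choose Suc j) * (card (UNIV::'a set) - 1)^(Suc j) + (card (UNIV::'a set) - 1) * ((length c choose j) * (card (UNIV::'a set) - 1)^j)"
      using Cons.IH by simp
    also have "\<dots> = (length (a#c) choose k) * (card (UNIV::'a set) - 1)^k"
      using Suc binom_aux[of "length c" j "card (UNIV::'a set) - 1"] by simp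
    finally show ?thesis .
  qed
qed

lemma card_filter_sum: "finite A \<Longrightarrow> card {x\<in>A. P x} = (\<Sum>x\<in>A. if P x then 1 else 0)"
  by (simp add: sum.If_cases Int_def)

lemma count_bound:
  fixes C :: "'a::finite list set"
  assumes code: "C \<subseteq> {x. length x = n}" and dec: "list_decodable n C tau L" and k: "k \<le> tau"
  shows "card C * ((n choose k) * (card (UNIV::'a set) - 1)^k) \<le> L * card (UNIV::'a set)^n"
proof -
  let ?W = "{y::'a list. length y = n}"
  have Weq: "?W = {xs. set xs \<subseteq> UNIV \<and> length xs = n}" by auto
  have finW: "finite ?W" unfolding Weq by (rule finite_lists_length_eq) simp
  have cardW: "card ?W = card (UNIV::'a set)^n" unfolding Weq by (rule card_lists_length_eq) simp
  have finC: "finite C" using finW code finite_subset by blast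
  let ?P = "\<lambda>c y. hamming_dist c y \<le> tau"
  have cf1: "card {c\<in>C. ?P c y} = (\<Sum>c\<in>C. if ?P c y then 1 else 0)" for y
    by (rule card_filter_sum[OF finC])
  have cf2: "card {y\<in>?W. ?P c y} = (\<Sum>y\<in>?W. if ?P c y then 1 else 0)" for c
    by (rule card_filter_sum[OF finW])
  have "(\<Sum>y\<in>?W. card {c\<in>C. ?P c y}) = (\<Sum>y\<in>?W. \<Sum>c\<in>C. if ?P c y then 1 else 0)"
    by (simp only: cf1)
  also have "\<dots> = (\<Sum>c\<in>C. \<Sum>y\<in>?W. if ?P c y then 1 else 0)" by (rule sum.swap)
  also have "\<dots> = (\<Sum>c\<in>C. card {y\<in>?W. ?P c y})" by (simp only: cf2)
  finally have swap: "(\<Sum>y\<in>?W. card {c\<in>C. ?P c y}) = (\<Sum>c\<in>C. card {y\<in>?W. ?P c y})" .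
  have "(\<Sum>y\<in>?W. card {c\<in>C. ?P c y}) \<le> (\<Sum>y\<in>?W. L)"
    using dec unfolding list_decodable_def by (intro sum_mono) auto
  also have "\<dots> = L * card (UNIV::'a set)^n" using cardW by simp
  finally have up: "(\<Sum>c\<in>C. card {y\<in>?W. ?P c y}) \<le> L * card (UNIV::'a set)^n" using swap by simp
  have "(\<Sum>c\<in>C. (n choose k) * (card (UNIV::'a set) - 1)^k) \<le> (\<Sum>c\<in>C. card {y\<in>?W. ?P c y})"
  proof (rule sum_mono)
    fix c assume cC: "c \<in> C"
    hence lc: "length c = n" using code by auto
    have "(n choose k) * (card (UNIV::'a set) - 1)^k = card {y. length y = length c \<and> hamming_dist c y = k}"
      using sphere_card[of c k] lc by simp
    also have "\<dots> \<le> card {y\<in>?W. ?P c y}"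
      using k lc by (intro card_mono) (auto intro: finite_subset[OF _ finW])
    finally show "(n choose k) * (card (UNIV::'a set) - 1)^k \<le> card {y\<in>?W. ?P c y}" .
  qed
  thus ?thesis using up by simp
qed


lemma h_ln: "bin_entropy x = (- x * ln x - (1 - x) * ln (1 - x)) / ln 2"
  unfolding bin_entropy_def log_def by (simp add: field_simps)

lemma DERIV_h:
  assumes "0 < x" "x < 1"
  shows "DERIV bin_entropy x :> (ln (1-x) - ln x) / ln 2"
proof -
  have "DERIV (\<lambda>x. (- x * ln x - (1 - x) * ln (1 - x)) / ln 2) x :> (ln (1-x) - ln x) / ln 2"
    apply (intro derivative_eq_intros)
    using assms apply simp_all
    apply (simp add: field_simps)
    done
  thus ?thesis unfolding h_ln[abs_def] by simp
qed

lemma DERIV_h':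
  fixes x :: real
  assumes "0 < x" "x < 1"
  shows "DERIV (\<lambda>x. (ln (1-x) - ln x) / ln 2) x :> - 1 / (ln 2 * (x * (1 - x)))"
    apply (intro derivative_eq_intros)
    using assms apply simp_all
    apply (simp add: field_simps)
    done

lemma h_nonneg: assumes "0 \<le> x" "x \<le> 1" shows "0 \<le> bin_entropy x"
proof -
  have a: "x * ln x \<le> 0"
    using assms by (cases "x = 0") (auto intro!: mult_nonneg_nonpos)
  have b: "(1 - x) * ln (1 - x) \<le> 0"
    using assms by (cases "x = 1") (auto intro!: mult_nonneg_nonpos)
  show ?thesis unfolding h_ln using a b by (intro divide_nonneg_pos) auto
qed

lemma gibbs:
  assumes "0 < p" "p < 1" "0 < y" "y < 1"
  shows "bin_entropy y \<le> (- y * ln p - (1 - y) * ln (1 - p)) / ln 2"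
proof -
  have "ln (p / y) \<le> p / y - 1" using assms by (intro ln_le_minus_one) auto
  hence "y * ln (p / y) \<le> y * (p / y - 1)" using assms by (intro mult_left_mono) auto
  also have "\<dots> = p - y" using assms by (simp add: field_simps)
  finally have a: "y * ln (p / y) \<le> p - y" .
  have "ln ((1-p) / (1-y)) \<le> (1-p) / (1-y) - 1" using assms by (intro ln_le_minus_one) auto
  hence "(1-y) * ln ((1-p) / (1-y)) \<le> (1-y) * ((1-p) / (1-y) - 1)" using assms by (intro mult_left_mono) auto
  also have "\<dots> = y - p" using assms by (simp add: field_simps)
  finally have b: "(1-y) * ln ((1-p) / (1-y)) \<le> y - p" .
  have "y * ln (p/y) + (1-y) * ln ((1-p)/(1-y)) = (- y * ln y - (1 - y) * ln (1 - y)) - (- y * ln p - (1 - y) * ln (1 - p))"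
    using assms by (simp add: ln_div algebra_simps)
  hence "- y * ln y - (1 - y) * ln (1 - y) \<le> - y * ln p - (1 - y) * ln (1 - p)" using a b by linarith
  thus ?thesis unfolding h_ln by (intro divide_right_mono) auto
qed


lemma hq:
  assumes "2 \<le> q"
  shows "bin_entropy (1/real q) = (ln (real q) - ((real q - 1)/real q) * ln (real q - 1)) / ln 2"
proof -
  have q: "real q \<ge> 2" using assms by simp
  have e1: "1 - 1/real q = (real q - 1)/real q" using q by (simp add: field_simps)
  have l1: "ln (1/real q) = - ln (real q)" using q by (simp add: ln_div)
  have l2: "ln ((real q - 1)/real q) = ln (real q - 1) - ln (real q)" using q by (simp add: ln_div)
  show ?thesis unfolding h_ln e1 l1 l2 using q by (simp add: field_simps)
qed

lemma eta_le:
  assumes "2 \<le> q" "0 < e" "e < 1"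
  shows "eta q e \<le> e * log 2 (real q)"
proof -
  have q: "real q \<ge> 2" using assms by simp
  define m where "m = (real q - 1)/real q"
  define y where "y = m * (1 - e)"
  have m0: "0 < m" "m < 1" using q unfolding m_def by (auto simp: field_simps)
  have me: "m * e > 0" using m0 assms by simp
  have ye: "y = m - m*e" by (simp add: y_def right_diff_distrib)
  have y0: "0 < y" "y < 1" using m0 assms unfolding y_def apply simp
    using ye me m0 y_def by linarith
  have g: "bin_entropy y \<le> (- y * ln m - (1 - y) * ln (1 - m)) / ln 2" by (rule gibbs[OF m0 y0])
  have lm: "ln m = ln (real q - 1) - ln (real q)" using q unfolding m_def by (simp add: ln_div)
  have l1m: "ln (1 - m) = - ln (real q)" using q unfolding m_def by (simp add: field_simps ln_div)
  have "eta q e = bin_entropy y - (1-e) * ((ln (real q) - m * ln (real q - 1)) / ln 2)"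
    unfolding eta_def hq[OF assms(1)] y_def m_def by simp
  also have "\<dots> \<le> (- y * ln m - (1 - y) * ln (1 - m)) / ln 2 - (1-e) * ((ln (real q) - m * ln (real q - 1)) / ln 2)"
    using g by simp
  also have "\<dots> = e * log 2 (real q)"
    unfolding lm l1m log_def y_def by (simp add: field_simps)
  finally show ?thesis .
qed

lemma f_mono:
  assumes "2 \<le> q" "0 < a" "a \<le> b" "b \<le> (real q - 1)/real q"
  shows "bin_entropy a + a * log 2 (real q - 1) \<le> bin_entropy b + b * log 2 (real q - 1)"
proof (rule DERIV_nonneg_imp_nondecreasing[OF assms(3)])
  fix x assume x: "a \<le> x" "x \<le> b"
  have q: "real q \<ge> 2" using assms by simp
  have m1: "(real q - 1)/real q < 1" using q by simp
  have x0: "0 < x" "x < 1" using x assms m1 by linarith+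
  have d: "DERIV (\<lambda>x. bin_entropy x + x * log 2 (real q - 1)) x :> (ln (1-x) - ln x) / ln 2 + 1 * log 2 (real q - 1)"
    by (rule derivative_eq_intros DERIV_h[OF x0] | simp)+
  have "x \<le> (1 - x) * (real q - 1)"
  proof -
    have "b * real q \<le> real q - 1" using assms q by (simp add: le_divide_eq)
    moreover have "x * real q \<le> b * real q" using x q by (intro mult_right_mono) auto
    ultimately have "x * real q \<le> real q - 1" by linarith
    thus ?thesis by (simp add: algebra_simps)
  qed
  hence "ln x \<le> ln ((1 - x) * (real q - 1))" using x0 q by (subst ln_le_cancel_iff) auto
  hence "ln x \<le> ln (1 - x) + ln (real q - 1)" using x0 q by (simp add: ln_mult)
  hence "0 \<le> (ln (1-x) - ln x) / ln 2 + 1 * log 2 (real q - 1)"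
    unfolding log_def by (simp add: divide_simps)
  thus "\<exists>y. DERIV (\<lambda>x. bin_entropy x + x * log 2 (real q - 1)) x :> y \<and> 0 \<le> y" using d by blast
qed


lemma DERIV_h_aff:
  fixes a b e :: real
  assumes "0 < a + b*e" "a + b*e < 1"
  shows "DERIV (\<lambda>e. bin_entropy (a + b*e)) e :> (ln (1 - (a+b*e)) - ln (a+b*e)) / ln 2 * b"
proof -
  have "DERIV (\<lambda>e. a + b*e) e :> b" by (rule derivative_eq_intros | simp)+
  from DERIV_chain2[OF DERIV_h[OF assms] this] show ?thesis .
qed

lemma DERIV_h'_aff:
  fixes a b e :: real
  assumes "0 < a + b*e" "a + b*e < 1"
  shows "DERIV (\<lambda>e. (ln (1 - (a+b*e)) - ln (a+b*e)) / ln 2 * b) e :> - 1 / (ln 2 * ((a+b*e) * (1 - (a+b*e)))) * b * b"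
proof -
  have "DERIV (\<lambda>e. a + b*e) e :> b" by (rule derivative_eq_intros | simp)+
  from DERIV_chain2[OF DERIV_h'[OF assms] this]
  have "DERIV (\<lambda>e. (ln (1 - (a+b*e)) - ln (a+b*e)) / ln 2) e :> - 1 / (ln 2 * ((a+b*e) * (1 - (a+b*e)))) * b" .
  from DERIV_cmult_right[OF this, of b] show ?thesis by simp
qed

definition mq :: "nat \<Rightarrow> real" where "mq q = (real q - 1) / real q"

lemma mq_bounds: "2 \<le> q \<Longrightarrow> 0 < mq q \<and> mq q < 1 \<and> 1/2 \<le> mq q"
  unfolding mq_def by (auto simp: field_simps)

lemma eta_alt: "eta q e = bin_entropy (mq q + (- mq q) * e) - (1-e) * bin_entropy (1/real q)"
proof -
  have eq: "(real q - 1) / real q * (1 - e) = mq q + (- mq q) * e" unfolding mq_def by (cases "q = 0") (simp_all add: field_simps)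
  show ?thesis unfolding eta_def eq ..
qed

lemma eta_concave:
  assumes q: "2 \<le> q" and ab: "0 < a" "b < 1"
  shows "convex_on {a..b} (\<lambda>e. - eta q e)"
proof -
  let ?m = "mq q" and ?H = "bin_entropy (1/real q)"
  have m: "0 < ?m" "?m < 1" using mq_bounds[OF q] by auto
  have in01: "0 < ?m + (- ?m) * e \<and> ?m + (- ?m) * e < 1" if "e \<in> {a..b}" for e
  proof -
    have e: "0 < e" "e < 1" using that ab by auto
    have "?m * e > 0" "?m * e < ?m" using m e by (auto simp: mult_less_cancel_left1)
    thus ?thesis using m by simp
  qed
  show ?thesis
  proof (rule f''_ge0_imp_convex)
    show "convex {a..b}" by simp
    fix e assume e: "e \<in> {a..b}"
    note i = in01[OF e]
    show "DERIV (\<lambda>e. - eta q e) e :> (- ((ln (1 - (?m + (- ?m)*e)) - ln (?m + (- ?m)*e)) / ln 2 * (- ?m)) - ?H)"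
      unfolding eta_alt
      by (rule derivative_eq_intros DERIV_h_aff[OF conjunct1[OF i] conjunct2[OF i]] | simp)+
    show "DERIV (\<lambda>e. - ((ln (1 - (?m + (- ?m)*e)) - ln (?m + (- ?m)*e)) / ln 2 * (- ?m)) - ?H) e :>
       (- (- 1 / (ln 2 * ((?m + (- ?m)*e) * (1 - (?m + (- ?m)*e)))) * (- ?m) * (- ?m)) - 0)"
      by (rule derivative_eq_intros DERIV_h'_aff[OF conjunct1[OF i] conjunct2[OF i]] | simp)+
    show "0 \<le> (- (- 1 / (ln 2 * ((?m + (- ?m)*e) * (1 - (?m + (- ?m)*e)))) * (- ?m) * (- ?m)) - 0)"
      using i by (simp add: divide_simps)
  qed
qed


definition Dq :: "nat \<Rightarrow> real \<Rightarrow> real" where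
  "Dq q e = bin_entropy (0 + mq q * e) - e * bin_entropy (1/real q) - bin_entropy (mq q + (- mq q) * e) + (1-e) * bin_entropy (1/real q)"

lemma Dq_eq: "eta q (1-e) - eta q e = Dq q e"
proof -
  have "mq q + (- mq q) * (1 - e) = 0 + mq q * e" by (simp add: algebra_simps)
  thus ?thesis unfolding eta_alt Dq_def by simp
qed

lemma Dq_half: "Dq q (1/2) = 0"
proof -
  have "0 + mq q * (1/2) = mq q + (- mq q) * (1/2)" by simp
  thus ?thesis unfolding Dq_def by simp
qed

lemma Dq_concave:
  assumes q: "2 \<le> q" and d: "0 < d"
  shows "convex_on {d..1/2} (\<lambda>e. - Dq q e)"
proof -
  let ?m = "mq q" and ?H = "bin_entropy (1/real q)"
  have m: "0 < ?m" "?m < 1" using mq_bounds[OF q] by auto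
  show ?thesis
  proof (rule f''_ge0_imp_convex)
    show "convex {d..1/2}" by simp
    fix e assume e: "e \<in> {d..1/2}"
    have e0: "0 < e" "e \<le> 1/2" using e d by auto
    define u where "u = 0 + ?m * e"
    define v where "v = ?m + (- ?m) * e"
    have me: "0 < ?m * e" "?m * e \<le> ?m / 2" using m e0 by (auto simp: mult_left_mono)
    have u: "0 < u" "u < 1" using me m unfolding u_def by linarith+
    have v: "0 < v" "v < 1" using me m unfolding v_def by linarith+
    have uv: "u \<le> v" "u + v \<le> 1" using me m unfolding u_def v_def by linarith+
    show "DERIV (\<lambda>e. - Dq q e) e :> - ((ln (1 - (0 + ?m*e)) - ln (0 + ?m*e)) / ln 2 * ?m - ?H
        - (ln (1 - (?m + (- ?m)*e)) - ln (?m + (- ?m)*e)) / ln 2 * (- ?m) - ?H)"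
      unfolding Dq_def
      by (rule derivative_eq_intros DERIV_h_aff[of 0 "?m" e] DERIV_h_aff[of "?m" "- ?m" e] | use u v in \<open>simp add: u_def v_def\<close>)+
    show "DERIV (\<lambda>e. - ((ln (1 - (0 + ?m*e)) - ln (0 + ?m*e)) / ln 2 * ?m - ?H
        - (ln (1 - (?m + (- ?m)*e)) - ln (?m + (- ?m)*e)) / ln 2 * (- ?m) - ?H)) e :>
       - (- 1 / (ln 2 * ((0 + ?m*e) * (1 - (0 + ?m*e)))) * ?m * ?m - 0
        - (- 1 / (ln 2 * ((?m + (- ?m)*e) * (1 - (?m + (- ?m)*e)))) * (- ?m) * (- ?m)) - 0)"
    proof -
      have d1: "DERIV (\<lambda>e. (ln (1 - (0 + ?m*e)) - ln (0 + ?m*e)) / ln 2 * ?m) e :> - 1 / (ln 2 * ((0 + ?m*e) * (1 - (0 + ?m*e)))) * ?m * ?m"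
        by (rule DERIV_h'_aff) (use u in \<open>simp_all add: u_def\<close>)
      have d2: "DERIV (\<lambda>e. (ln (1 - (?m + (- ?m)*e)) - ln (?m + (- ?m)*e)) / ln 2 * (- ?m)) e :> - 1 / (ln 2 * ((?m + (- ?m)*e) * (1 - (?m + (- ?m)*e)))) * (- ?m) * (- ?m)"
        by (rule DERIV_h'_aff) (use v in \<open>simp_all add: v_def\<close>)
      show ?thesis by (intro DERIV_minus DERIV_diff d1 d2 DERIV_const)
    qed
    have uu: "0 < u * (1 - u)" "0 < v * (1 - v)" using u v by auto
    have "u * (1 - u) \<le> v * (1 - v)"
    proof -
      have "v * (1 - v) - u * (1 - u) = (v - u) * (1 - (u + v))" by (simp add: algebra_simps)
      also have "\<dots> \<ge> 0" using uv by simp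
      finally show ?thesis by simp
    qed
    hence "1 / (v * (1 - v)) \<le> 1 / (u * (1 - u))" using uu by (intro divide_left_mono) auto
    hence "?m * ?m / ln 2 * (1 / (v * (1 - v))) \<le> ?m * ?m / ln 2 * (1 / (u * (1 - u)))"
      by (intro mult_left_mono) auto
    thus "0 \<le> - (- 1 / (ln 2 * ((0 + ?m*e) * (1 - (0 + ?m*e)))) * ?m * ?m - 0
        - (- 1 / (ln 2 * ((?m + (- ?m)*e) * (1 - (?m + (- ?m)*e)))) * (- ?m) * (- ?m)) - 0)"
    proof -
      have "- (- 1 / (ln 2 * (u * (1 - u))) * ?m * ?m - 0 - (- 1 / (ln 2 * (v * (1 - v))) * (- ?m) * (- ?m)) - 0)
         = ?m * ?m / ln 2 * (1 / (u * (1 - u))) - ?m * ?m / ln 2 * (1 / (v * (1 - v)))"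
        by (simp add: field_simps)
      thus ?thesis unfolding u_def[symmetric] v_def[symmetric] using \<open>?m * ?m / ln 2 * (1 / (v * (1 - v))) \<le> ?m * ?m / ln 2 * (1 / (u * (1 - u)))\<close> by linarith
    qed
  qed
qed


lemma Dq_lower:
  assumes q: "2 \<le> q" and d: "0 < d" "d \<le> 1/2"
  shows "- d * (2 * bin_entropy (1/real q) + mq q * log 2 (real q - 1)) \<le> Dq q d"
proof -
  let ?m = "mq q" and ?H = "bin_entropy (1/real q)"
  have qq: "real q \<ge> 2" using q by simp
  have m: "0 < ?m" "?m < 1" using mq_bounds[OF q] by auto
  have md: "0 < ?m * d" "?m * d \<le> ?m / 2" using m d by (auto simp: mult_left_mono)
  define y where "y = ?m + (- ?m) * d"
  have y: "0 < y" "y < 1" using md m unfolding y_def by linarith+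
  have g: "bin_entropy y \<le> (- y * ln ?m - (1 - y) * ln (1 - ?m)) / ln 2" by (rule gibbs[OF m y])
  have lm: "ln ?m = ln (real q - 1) - ln (real q)" using qq unfolding mq_def by (simp add: ln_div)
  have l1m: "ln (1 - ?m) = - ln (real q)" using qq unfolding mq_def by (simp add: field_simps ln_div)
  have "(- y * ln ?m - (1 - y) * ln (1 - ?m)) / ln 2 = ?H + ?m * d * log 2 (real q - 1)"
    unfolding lm l1m hq[OF q] y_def log_def mq_def[symmetric] by (simp add: field_simps)
  hence g2: "bin_entropy y \<le> ?H + ?m * d * log 2 (real q - 1)" using g by simp
  have h0: "0 \<le> bin_entropy (0 + ?m * d)" by (rule h_nonneg) (use md m in linarith)+
  have "Dq q d = bin_entropy (0 + ?m * d) - d * ?H - bin_entropy y + (1-d) * ?H"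
    unfolding Dq_def y_def ..
  thus ?thesis using g2 h0 by (simp add: algebra_simps)
qed

lemma Dq_nonneg:
  assumes q: "2 \<le> q" and e: "0 < e" "e \<le> 1/2"
  shows "0 \<le> Dq q e"
proof (rule ccontr)
  assume neg: "\<not> 0 \<le> Dq q e"
  let ?c = "2 * bin_entropy (1/real q) + mq q * log 2 (real q - 1) + 1"
  have qq: "real q \<ge> 2" using q by simp
  have H0: "0 \<le> bin_entropy (1/real q)" using qq by (intro h_nonneg) auto
  have l0: "0 \<le> log 2 (real q - 1)" using qq by simp
  have m0: "0 \<le> mq q" using mq_bounds[OF q] by auto
  have c: "1 \<le> ?c" using H0 l0 m0 by simp
  define d where "d = min e (- Dq q e / (2 * ?c))"
  have "- Dq q e / (2 * ?c) > 0" using neg c by (intro divide_pos_pos) auto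
  hence d0: "0 < d" using e unfolding d_def by simp
  have de: "d \<le> e" unfolding d_def by simp
  have "d \<le> - Dq q e / (2 * ?c)" unfolding d_def by simp
  hence "d * ?c \<le> (- Dq q e / (2 * ?c)) * ?c" using c by (intro mult_right_mono) auto
  also have "\<dots> = - Dq q e / 2" using c by (simp add: field_simps)
  finally have dc: "d * ?c \<le> - Dq q e / 2" .
  have low: "- d * (?c - 1) \<le> Dq q d" using Dq_lower[OF q d0] de e by simp
  have cv: "convex_on {d..1/2} (\<lambda>e. - Dq q e)" by (rule Dq_concave[OF q d0])
  show False
  proof (cases "d = e")
    case True
    hence "- d * (?c - 1) \<le> Dq q e" using low by simp
    moreover have "d * (?c - 1) \<le> d * ?c" using d0 by simp
    ultimately show False using dc neg by linarith
  next
    case False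
    hence dlt: "d < e" using de by simp
    define t where "t = (e - d) / (1/2 - d)"
    have t: "0 \<le> t" "t \<le> 1" using dlt e unfolding t_def by (auto simp: divide_simps)
    have "t * (1/2 - d) = e - d" using dlt e unfolding t_def by simp
    moreover have "(1 - t) * d + t * (1/2) = d + t * (1/2 - d)" by (simp add: algebra_simps)
    ultimately have et: "e = (1 - t) *\<^sub>R d + t *\<^sub>R (1/2)" by simp
    have "- Dq q e \<le> (1 - t) * (- Dq q d) + t * (- Dq q (1/2))"
      unfolding et by (rule convex_onD[OF cv]) (use t d0 de e in auto)
    hence "(1 - t) * Dq q d \<le> Dq q e" using Dq_half[of q] by simp
    moreover have "(1 - t) * (- d * (?c - 1)) \<le> (1 - t) * Dq q d" using low t by (intro mult_left_mono) auto
    moreover have "- d * ?c \<le> (1 - t) * (- d * (?c - 1))"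
    proof -
      have "0 \<le> d * (?c - 1)" using d0 c by simp
      hence "(1 - t) * (d * (?c - 1)) \<le> d * (?c - 1)" using t by (intro mult_left_le_one_le) auto
      hence "(1 - t) * (- d * (?c - 1)) \<ge> - d * (?c - 1)" by simp
      moreover have "- d * (?c - 1) \<ge> - d * ?c" using d0 by simp
      ultimately show ?thesis by linarith
    qed
    ultimately show False using dc neg by linarith
  qed
qed

lemma eta_ge:
  assumes q: "2 \<le> q" and eps: "0 < eps" "eps \<le> 1/2" and R: "eps \<le> R" "R \<le> 1 - eps"
  shows "eta q eps \<le> eta q R"
proof -
  have D: "eta q eps \<le> eta q (1 - eps)" using Dq_nonneg[OF q eps] Dq_eq[of q eps] by simp
  show ?thesis
  proof (cases "eps = 1/2")
    case True hence "R = eps" using R by linarith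
    thus ?thesis by simp
  next
    case False
    hence lt: "eps < 1 - eps" using eps by simp
    have cv: "convex_on {eps..1-eps} (\<lambda>e. - eta q e)" by (rule eta_concave[OF q eps(1)]) (use eps in simp)
    define t where "t = (R - eps) / (1 - eps - eps)"
    have t: "0 \<le> t" "t \<le> 1" using lt R unfolding t_def by (auto simp: divide_simps)
    have "t * (1 - eps - eps) = R - eps" using lt unfolding t_def by simp
    moreover have "(1 - t) * eps + t * (1 - eps) = eps + t * (1 - eps - eps)" by (simp add: algebra_simps)
    ultimately have et: "R = (1 - t) *\<^sub>R eps + t *\<^sub>R (1 - eps)" by simp
    have "- eta q R \<le> (1 - t) * (- eta q eps) + t * (- eta q (1 - eps))"
      unfolding et by (rule convex_onD[OF cv]) (use t lt in auto)
    moreover have "t * eta q eps \<le> t * eta q (1 - eps)" using D t by (intro mult_left_mono) auto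
    ultimately show ?thesis by (simp add: algebra_simps)
  qed
qed


lemma pow2_log: "0 < b \<Longrightarrow> 2 powr (a * log 2 b) = b powr a"
  unfolding powr_def log_def by simp

lemma card_field_ge2: "2 \<le> card (UNIV :: ('a::{finite,field}) set)"
proof -
  have "{0::'a, 1} \<subseteq> UNIV" by simp
  hence "card {0::'a, 1} \<le> card (UNIV::'a set)" by (intro card_mono) auto
  thus ?thesis by simp
qed

theorem mainTheorem2:
  fixes C :: "('a::{finite,field}) list set"
    and n L tau :: nat and eps :: real
  defines "q \<equiv> card (UNIV :: 'a set)"
  defines "R \<equiv> log (real q) (real (card C)) / real n"
  assumes eps: "0 < eps" "eps \<le> 1/2"
    and code: "C \<subseteq> {x. length x = n}"
    and rate: "eps \<le> R" "R \<le> 1 - eps"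
    and L: "L \<ge> 1" "real L < 1 / sqrt (2 * real n) * 2 powr (eta q eps * real n)"
    and tau: "real tau \<ge> real L * real n * (1 - R) / (real L + 1)"
    and dec: "list_decodable n C tau L"
  shows "real L < real q - 1"
proof (rule ccontr)
  assume "\<not> real L < real q - 1"
  hence Lq: "real q - 1 \<le> real L" by simp
  have q2: "2 \<le> q" unfolding q_def by (rule card_field_ge2)
  have qr: "real q \<ge> 2" using q2 by simp
  have n1: "1 \<le> n"
  proof (rule ccontr)
    assume "\<not> 1 \<le> n" hence "n = 0" by simp
    hence "R = 0" unfolding R_def by simp
    thus False using rate eps by simp
  qed
  have nr: "real n \<ge> 1" using n1 by simp
  have C1: "1 \<le> card C"
  proof (rule ccontr)
    assume "\<not> 1 \<le> card C" hence "card C = 0" by simp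
    hence "R = 0" unfolding R_def by (simp add: log_def)
    thus False using rate eps by simp
  qed
  have Rn: "real n * R = log (real q) (real (card C))" unfolding R_def using nr by simp
  have cardC: "real (card C) = real q powr (real n * R)"
    unfolding Rn using qr C1 by (simp add: powr_log_cancel)
  define m where "m = (real q - 1) / real q"
  have m0: "0 < m" "m < 1" using qr unfolding m_def by (auto simp: field_simps)
  have R1: "0 < 1 - R" using rate eps by linarith
  have lam: "m \<le> real L / (real L + 1)"
    using Lq qr unfolding m_def by (simp add: field_simps)
  have "m * real n * (1 - R) \<le> real L / (real L + 1) * real n * (1 - R)"
    using lam nr R1 by (intro mult_right_mono) auto
  hence tau2: "m * (1 - R) * real n \<le> real tau" using tau by (simp add: algebra_simps)
  define j where "j = (q - 1) * n div q"
  define k where "k = min tau j"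
  have kt: "k \<le> tau" unfolding k_def by simp
  have jn: "real j \<le> m * real n"
  proof -
    have "q * j \<le> (q - 1) * n" unfolding j_def by simp
    hence "real (q * j) \<le> real ((q - 1) * n)" by (simp only: of_nat_le_iff)
    hence "real q * real j \<le> (real q - 1) * real n" using q2 by (simp add: of_nat_diff)
    thus ?thesis unfolding m_def using qr by (simp add: field_simps)
  qed
  have kn: "k \<le> n"
  proof -
    have "m * real n \<le> real n" using m0 nr by simp
    hence "real j \<le> real n" using jn by linarith
    thus ?thesis unfolding k_def by simp
  qed
  show False
  proof (cases "m * (1 - R) * real n \<le> real k")
    case True
    define x where "x = real k / real n"
    define x0 where "x0 = m * (1 - R)"
    have kx: "real k = real n * x" unfolding x_def using nr by simp
    have x0x: "x0 \<le> x" using True nr unfolding x_def x0_def by (simp add: field_simps)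
    have xm: "x \<le> m"
    proof -
      have "real k \<le> real j" unfolding k_def by simp
      hence "real k \<le> m * real n" using jn by simp
      thus ?thesis unfolding x_def using nr by (simp add: field_simps)
    qed
    have x00: "0 < x0" unfolding x0_def using m0 R1 by simp
    have fm: "bin_entropy x0 + x0 * log 2 (real q - 1) \<le> bin_entropy x + x * log 2 (real q - 1)"
      by (rule f_mono[OF q2 x00 x0x]) (use xm in \<open>simp add: m_def\<close>)
    have ident: "bin_entropy x0 + x0 * log 2 (real q - 1) - (1 - R) * log 2 (real q) = eta q R"
      unfolding eta_def hq[OF q2] x0_def m_def log_def using qr by (simp add: field_simps)
    have eg: "eta q eps \<le> eta q R" by (rule eta_ge[OF q2 eps rate])
    have key: "eta q eps + log 2 (real q) \<le> R * log 2 (real q) + bin_entropy x + x * log 2 (real q - 1)"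
      using fm ident eg by (simp add: algebra_simps)
    have cb: "card C * ((n choose k) * (q - 1)^k) \<le> L * q^n"
      using count_bound[OF code dec kt] unfolding q_def .
    hence cbr: "real (card C) * (real (n choose k) * (real q - 1)^k) \<le> real L * real q ^ n"
    proof -
      have "real (card C * ((n choose k) * (q - 1)^k)) \<le> real (L * q^n)" using cb by (simp only: of_nat_le_iff)
      thus ?thesis using q2 by (simp add: of_nat_diff)
    qed
    have bl: "2 powr (real n * bin_entropy x) / sqrt (2 * real n) \<le> real (n choose k)"
      unfolding x_def by (rule binom_lower[OF kn n1])
    have q1: "real q - 1 > 0" using qr by simp
    have e1: "real (card C) = 2 powr (real n * R * log 2 (real q))"
      using cardC qr by (simp add: pow2_log)
    have e2: "(real q - 1)^k = 2 powr (real n * x * log 2 (real q - 1))"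
      using q1 by (simp add: pow2_log kx[symmetric] powr_realpow)
    have e3: "real q ^ n = 2 powr (real n * log 2 (real q))"
      using qr by (simp add: pow2_log powr_realpow)
    have sq: "sqrt (2 * real n) > 0" using nr by simp
    have "real L * real q ^ n < 1 / sqrt (2 * real n) * 2 powr (eta q eps * real n) * real q ^ n"
      using L(2) e3 by (intro mult_strict_right_mono) auto
    also have "\<dots> = 2 powr (real n * (eta q eps + log 2 (real q))) / sqrt (2 * real n)"
      unfolding e3 by (simp add: powr_add[symmetric] algebra_simps)
    also have "\<dots> \<le> 2 powr (real n * (R * log 2 (real q) + bin_entropy x + x * log 2 (real q - 1))) / sqrt (2 * real n)"
      using key nr sq by (intro divide_right_mono powr_mono mult_left_mono) auto
    also have "\<dots> = 2 powr (real n * R * log 2 (real q)) * (2 powr (real n * bin_entropy x) / sqrt (2 * real n)) * 2 powr (real n * x * log 2 (real q - 1))"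
      by (simp add: powr_add[symmetric] algebra_simps)
    also have "\<dots> \<le> real (card C) * real (n choose k) * (real q - 1)^k"
      unfolding e1 e2 using bl by (intro mult_right_mono mult_left_mono) auto
    also have "\<dots> \<le> real L * real q ^ n" using cbr by (simp add: mult.assoc)
    finally show False by simp
  next
    case False
    have kj: "k = j" using False tau2 unfolding k_def by (auto simp: min_def split: if_splits)
    have "(q - 1) * n = q * j + (q - 1) * n mod q" unfolding j_def by simp
    moreover have "(q - 1) * n mod q < q" using q2 by simp
    hence "(q - 1) * n mod q \<le> q - 1" by linarith
    ultimately have "(q - 1) * n \<le> q * j + (q - 1)" by linarith
    hence "real ((q - 1) * n) \<le> real (q * j + (q - 1))" by (simp only: of_nat_le_iff)
    hence "(real q - 1) * real n \<le> real q * real j + (real q - 1)" using q2 by (simp add: of_nat_diff)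
    hence h1: "(real q - 1) * (real n - 1) \<le> real q * real j" by (simp add: algebra_simps)
    have "m * real n - m = (real q - 1) * (real n - 1) / real q" unfolding m_def using qr by (simp add: field_simps)
    also have "\<dots> \<le> real q * real j / real q" using h1 qr by (intro divide_right_mono) auto
    also have "\<dots> = real j" using qr by simp
    finally have jlow: "m * real n - m \<le> real j" .
    have "real j < m * (1 - R) * real n" using False kj by simp
    hence "m * (R * real n) < m * 1" using jlow by (simp add: algebra_simps)
    hence Rn1: "real n * R < 1" using m0 by (simp add: mult.commute)
    have "real (card C) < real q powr 1"
      unfolding cardC using Rn1 qr by (intro powr_less_mono) auto
    hence "card C < q" using qr by simp
    hence cq: "real (card C) \<le> real q - 1" by linarith
    have el: "eta q eps \<le> eps * log 2 (real q)" by (rule eta_le[OF q2 eps(1)]) (use eps in linarith)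
    have "2 powr (eta q eps * real n) \<le> 2 powr (real n * eps * log 2 (real q))"
      using el nr by (intro powr_mono) (auto simp: algebra_simps intro: mult_left_mono)
    also have "\<dots> = real q powr (real n * eps)" using qr by (simp add: pow2_log)
    also have "\<dots> \<le> real q powr (real n * R)" using rate nr qr by (intro powr_mono mult_left_mono) auto
    also have "\<dots> \<le> real q - 1" using cq cardC by simp
    finally have p: "2 powr (eta q eps * real n) \<le> real q - 1" .
    have s1: "1 \<le> sqrt (2 * real n)" using nr by simp
    have "real L < 1 / sqrt (2 * real n) * 2 powr (eta q eps * real n)" by (rule L(2))
    also have "\<dots> \<le> 1 * (real q - 1)" using p s1 by (intro mult_mono) auto
    finally show False using Lq by simp
  qed
qed


end
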